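(* In the setting below, suppose $\eta \geq \eta_0$ and $t < \tau$. Then there is an integer $s$ with $t \le s \leq t + 1 + 4n/\gamma + 96/\gamma^2$ such that either $s = \tau$ or an oscillation happens at iteration $s$.
   Context: Dimension $d=2$. Data $x_1,\dots,x_n\in\mathbb{R}^2$ with $\|x_i\|\le 1$, linearly separable (some $w$ has $\langle w,x_i\rangle>0$ for all $i$). $F(w) = \frac{1}{n}\sum_{i=1}^n \log(1+\exp(-\langle w, x_i\rangle))$. Maximum margin $\gamma = \max_{\|w\|=1}\min_i \langle w, x_i\rangle$ with maximizer the unit vector $w_*$; $v_*$ is a fixed unit vector orthogonal to $w_*$. Gradient descent: $w_0=0$, $w_{t+1} = w_t - \eta\nabla F(w_t)$ with constant $\eta>0$. $\hat{w}_t = \langle w_t, w_*\rangle$, $\tilde{w}_t = \langle w_t, v_*\rangle$. $\tau = \min\{t\ge 0: F(w_t)\le 1/(8\eta)\}$. $\eta_0 = \max(n, \frac{32}{\gamma^2}\log\frac{256}{\gamma^2})$. $\lambda = \frac{1}{\gamma}\log\frac{1}{\exp(1/(8\eta))-1}$. An oscillation happens at iteration $t\ge 0$ if all of: (1) $\hat{w}_t \geq \lambda$; (2) $F(w_t) > 1/(8\eta)$ and $F(w_{t+1}) > 1/(8\eta)$; (3) $\tilde{w}_{t+1}\tilde{w}_t < 0$. *)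

theory Defs
  imports "HOL-Analysis.Analysis" "HOL-Library.Extended_Nat"
begin

definition logloss :: "nat \<Rightarrow> (nat \<Rightarrow> real^2) \<Rightarrow> real^2 \<Rightarrow> real" where
  "logloss n x w = (1 / real n) * (\<Sum>i<n. ln (1 + exp (- (w \<bullet> x i))))"

definition logloss_grad :: "nat \<Rightarrow> (nat \<Rightarrow> real^2) \<Rightarrow> real^2 \<Rightarrow> real^2" where
  "logloss_grad n x w = (1 / real n) *\<^sub>R (\<Sum>i<n. (- 1 / (1 + exp (w \<bullet> x i))) *\<^sub>R x i)"

fun gd :: "nat \<Rightarrow> (nat \<Rightarrow> real^2) \<Rightarrow> real \<Rightarrow> nat \<Rightarrow> real^2" where
  "gd n x eta 0 = 0"
| "gd n x eta (Suc t) = gd n x eta t - eta *\<^sub>R logloss_grad n x (gd n x eta t)"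

definition margin :: "nat \<Rightarrow> (nat \<Rightarrow> real^2) \<Rightarrow> real^2 \<Rightarrow> real" where
  "margin n x w = Min ((\<lambda>i. w \<bullet> x i) ` {..<n})"

definition max_margin :: "nat \<Rightarrow> (nat \<Rightarrow> real^2) \<Rightarrow> real" where
  "max_margin n x = (SUP w \<in> sphere 0 1. margin n x w)"

definition tau :: "nat \<Rightarrow> (nat \<Rightarrow> real^2) \<Rightarrow> real \<Rightarrow> enat" where
  "tau n x eta = (if \<exists>t. logloss n x (gd n x eta t) \<le> 1 / (8 * eta)
     then enat (LEAST t. logloss n x (gd n x eta t) \<le> 1 / (8 * eta)) else \<infinity>)"

definition eta0 :: "nat \<Rightarrow> real \<Rightarrow> real" where
  "eta0 n \<gamma> = max (real n) (32 / \<gamma>\<^sup>2 * ln (256 / \<gamma>\<^sup>2))"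

definition lam :: "real \<Rightarrow> real \<Rightarrow> real" where
  "lam \<gamma> eta = (1 / \<gamma>) * ln (1 / (exp (1 / (8 * eta)) - 1))"

definition oscillation :: "nat \<Rightarrow> (nat \<Rightarrow> real^2) \<Rightarrow> real \<Rightarrow> real^2 \<Rightarrow> real^2 \<Rightarrow> nat \<Rightarrow> bool" where
  "oscillation n x eta ws vs t \<longleftrightarrow>
     gd n x eta t \<bullet> ws \<ge> lam (max_margin n x) eta \<and>
     logloss n x (gd n x eta t) > 1 / (8 * eta) \<and>
     logloss n x (gd n x eta (Suc t)) > 1 / (8 * eta) \<and>
     (gd n x eta (Suc t) \<bullet> vs) * (gd n x eta t \<bullet> vs) < 0"

end

theory Submission
  imports Defs
begin

lemma ell_deriv: "((\<lambda>z. ln (1 + exp (- z))) has_real_derivative (- 1 / (1 + exp z))) (at z)"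
proof -
  have "((\<lambda>z. ln (1 + exp (- z))) has_real_derivative (1 / (1 + exp (-z))) * (exp (-z) * (-1))) (at z)"
    by (auto intro!: derivative_eq_intros simp: add_pos_pos)
  moreover have "(1 / (1 + exp (-z))) * (exp (-z) * (-1)) = - 1 / (1 + exp z)"
    by (simp add: exp_minus field_simps add_pos_pos)
  ultimately show ?thesis by simp
qed

lemma g_mono: "a \<le> b \<Longrightarrow> 1 / (1 + exp b) \<le> 1 / (1 + exp (a::real))"
  by (simp add: add_pos_pos frac_le)

lemma ell_tangent:
  fixes z z' :: real
  shows "ln (1 + exp (- z')) \<le> ln (1 + exp (- z)) - (z' - z) * (1 / (1 + exp z'))"
proof (cases z z' rule: linorder_cases)
  case less
  from MVT2[OF less, of "\<lambda>z. ln (1 + exp (- z))" "\<lambda>z. - 1 / (1 + exp z)"] ell_deriv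
  obtain \<xi> where \<xi>: "z < \<xi>" "\<xi> < z'"
    "ln (1 + exp (- z')) - ln (1 + exp (- z)) = (z' - z) * (- 1 / (1 + exp \<xi>))" by blast
  have "1 / (1 + exp z') \<le> 1 / (1 + exp \<xi>)" using g_mono[of \<xi> z'] \<xi> by simp
  then have "(z' - z) * (1 / (1 + exp z')) \<le> (z' - z) * (1 / (1 + exp \<xi>))"
    using less by (intro mult_left_mono) auto
  then show ?thesis using \<xi>(3) by simp
next
  case equal then show ?thesis by simp
next
  case greater
  from MVT2[OF greater, of "\<lambda>z. ln (1 + exp (- z))" "\<lambda>z. - 1 / (1 + exp z)"] ell_deriv
  obtain \<xi> where \<xi>: "z' < \<xi>" "\<xi> < z"
    "ln (1 + exp (- z)) - ln (1 + exp (- z')) = (z - z') * (- 1 / (1 + exp \<xi>))" by blast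
  have "1 / (1 + exp \<xi>) \<le> 1 / (1 + exp z')" using g_mono[of z' \<xi>] \<xi> by simp
  then have "(z - z') * (1 / (1 + exp \<xi>)) \<le> (z - z') * (1 / (1 + exp z'))"
    using greater by (intro mult_left_mono) auto
  moreover have "(z' - z) * (1 / (1 + exp z')) = - ((z - z') * (1 / (1 + exp z')))" by (metis minus_diff_eq minus_mult_left)
  ultimately show ?thesis using \<xi>(3) by linarith
qed

lemma ell_le_exp: "ln (1 + exp (- z)) \<le> exp (- (z::real))"
  by (rule ln_add_one_self_le_self) simp

lemma g_le_exp: "1 / (1 + exp z) \<le> exp (- (z::real))"
proof -
  have "exp z \<le> 1 + exp z" by simp
  then have "1 / (1 + exp z) \<le> 1 / exp z" by (intro frac_le) auto
  then show ?thesis by (simp add: exp_minus divide_inverse)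
qed

lemma g_ge_half: "0 \<le> (z::real) \<Longrightarrow> exp (- z) / 2 \<le> 1 / (1 + exp z)"
proof -
  assume "0 \<le> z"
  then have "1 \<le> exp z" by simp
  then have "1 + exp z \<le> 2 * exp z" by simp
  then show ?thesis by (simp add: exp_minus field_simps add_pos_pos)
qed

lemma g_pos: "0 < 1 / (1 + exp (z::real))" by (simp add: add_pos_pos)
lemma g_le1: "1 / (1 + exp (z::real)) \<le> 1" by (simp add: add_pos_pos)

lemma orth2_zero:
  fixes y ws vs :: "real^2"
  assumes "y \<bullet> ws = 0" "y \<bullet> vs = 0" "ws \<bullet> ws = 1" "vs \<bullet> vs = 1" "vs \<bullet> ws = 0"
  shows "y = 0"
proof -
  define p where "p = ws$1"
  define q where "q = ws$2"
  define r where "r = vs$1"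
  define t where "t = vs$2"
  have h1: "y$1 * p + y$2 * q = 0" using assms(1) by (simp add: inner_vec_def sum_2 p_def q_def)
  have h2: "y$1 * r + y$2 * t = 0" using assms(2) by (simp add: inner_vec_def sum_2 r_def t_def)
  have h3: "p*p + q*q = 1" using assms(3) by (simp add: inner_vec_def sum_2 p_def q_def)
  have h4: "r*r + t*t = 1" using assms(4) by (simp add: inner_vec_def sum_2 r_def t_def)
  have h5: "r*p + t*q = 0" using assms(5) by (simp add: inner_vec_def sum_2 p_def q_def r_def t_def)
  define D where "D = p*t - q*r"
  have "D * D = (p*p + q*q) * (r*r + t*t) - (r*p + t*q) * (r*p + t*q)"
    by (simp add: D_def algebra_simps)
  then have D1: "D * D = 1" using h3 h4 h5 by simp
  have "y$1 * D = t*(y$1 * p + y$2 * q) - q*(y$1 * r + y$2 * t)"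
    by (simp add: D_def algebra_simps)
  then have "y$1 * D = 0" using h1 h2 by simp
  then have y1: "y$1 = 0" using D1 by auto
  have "y$2 * D = p*(y$1 * r + y$2 * t) - r*(y$1 * p + y$2 * q)"
    by (simp add: D_def algebra_simps)
  then have "y$2 * D = 0" using h1 h2 by simp
  then have y2: "y$2 = 0" using D1 by auto
  show ?thesis using y1 y2 by (simp add: vec_eq_iff forall_2)
qed

lemma decomp2:
  fixes v ws vs :: "real^2"
  assumes "norm ws = 1" "norm vs = 1" "vs \<bullet> ws = 0"
  shows "v = (v \<bullet> ws) *\<^sub>R ws + (v \<bullet> vs) *\<^sub>R vs"
proof -
  have w1: "ws \<bullet> ws = 1" using assms(1) by (simp add: norm_eq_1)
  have v1: "vs \<bullet> vs = 1" using assms(2) by (simp add: norm_eq_1)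
  have o: "ws \<bullet> vs = 0" using assms(3) by (simp add: inner_commute)
  let ?y = "v - ((v \<bullet> ws) *\<^sub>R ws + (v \<bullet> vs) *\<^sub>R vs)"
  have "?y \<bullet> ws = 0" using w1 assms(3) by (simp add: inner_diff_left inner_add_left)
  moreover have "?y \<bullet> vs = 0" using v1 o by (simp add: inner_diff_left inner_add_left)
  ultimately have "?y = 0" using orth2_zero w1 v1 assms(3) by blast
  then show ?thesis by simp
qed

definition gg :: "real \<Rightarrow> real" where "gg r = 1 / (1 + exp r)"

lemma step_inner:
  "gd n x eta (Suc s) \<bullet> v = gd n x eta s \<bullet> v + eta / real n * (\<Sum>i<n. gg (gd n x eta s \<bullet> x i) * (x i \<bullet> v))"
proof -
  have "logloss_grad n x (gd n x eta s) \<bullet> v = (1 / real n) * (\<Sum>i<n. (- 1 / (1 + exp (gd n x eta s \<bullet> x i))) * (x i \<bullet> v))"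
    by (simp add: logloss_grad_def inner_sum_left)
  also have "\<dots> = - ((1 / real n) * (\<Sum>i<n. gg (gd n x eta s \<bullet> x i) * (x i \<bullet> v)))"
    by (simp add: gg_def sum_negf)
  finally show ?thesis by (simp add: inner_diff_left)
qed

locale setting =
  fixes n :: nat and x :: "nat \<Rightarrow> real^2" and eta :: real and ws vs :: "real^2"
  assumes n_pos: "n \<ge> 1"
    and bounded: "\<forall>i<n. norm (x i) \<le> 1"
    and separable: "\<exists>w. \<forall>i<n. w \<bullet> x i > 0"
    and ws_unit: "norm ws = 1"
    and ws_max: "margin n x ws = max_margin n x"
    and vs_unit: "norm vs = 1"
    and vs_orth: "vs \<bullet> ws = 0"
    and eta_pos: "eta > 0"
    and eta_ge: "eta \<ge> eta0 n (max_margin n x)"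
begin

definition "gam = max_margin n x"
definition "a i = x i \<bullet> ws"
definition "b i = x i \<bullet> vs"
definition "hat s = gd n x eta s \<bullet> ws"
definition "til s = gd n x eta s \<bullet> vs"
definition "z s i = gd n x eta s \<bullet> x i"
definition "F s = logloss n x (gd n x eta s)"
definition "u = eta * gam^2"
definition "dl = exp (- u / 2)"

lemma decomp_x: "x i = a i *\<^sub>R ws + b i *\<^sub>R vs"
  unfolding a_def b_def by (rule decomp2[OF ws_unit vs_unit vs_orth])

lemma z_eq: "z s i = hat s * a i + til s * b i"
proof -
  have "z s i = gd n x eta s \<bullet> (a i *\<^sub>R ws + b i *\<^sub>R vs)" unfolding z_def using decomp_x by metis
  then show ?thesis by (simp add: inner_add_right hat_def til_def)
qed

lemma inner_xx: "x i \<bullet> x j = a i * a j + b i * b j"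
proof -
  have "x i \<bullet> x j = x i \<bullet> (a j *\<^sub>R ws + b j *\<^sub>R vs)" using decomp_x by metis
  then show ?thesis by (simp add: inner_add_right a_def b_def)
qed

lemma inner_xx_bound: "i < n \<Longrightarrow> j < n \<Longrightarrow> \<bar>x i \<bullet> x j\<bar> \<le> 1"
proof -
  assume "i < n" "j < n"
  then have "norm (x i) \<le> 1" "norm (x j) \<le> 1" using bounded by auto
  moreover have "\<bar>x i \<bullet> x j\<bar> \<le> norm (x i) * norm (x j)" by (rule Cauchy_Schwarz_ineq2)
  moreover have "norm (x i) * norm (x j) \<le> 1 * 1"
    using calculation by (intro mult_mono) auto
  ultimately show ?thesis by linarith
qed

lemma ab_sq: "i < n \<Longrightarrow> (a i)^2 + (b i)^2 \<le> 1"
proof -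
  assume "i < n"
  then have "\<bar>x i \<bullet> x i\<bar> \<le> 1" using inner_xx_bound[of i i] by simp
  then show ?thesis using inner_xx[of i i] by (simp add: power2_eq_square)
qed

lemma b_bound: "i < n \<Longrightarrow> \<bar>b i\<bar> \<le> 1"
proof -
  assume "i < n"
  then have "(b i)^2 \<le> 1" using ab_sq[of i] by (smt (verit) zero_le_power2)
  then show ?thesis by (simp add: abs_le_square_iff[symmetric] power2_eq_square) (metis abs_le_square_iff one_power2 power2_eq_square abs_one)
qed

lemma zero_in: "0 \<in> {..<n}" using n_pos by simp

lemma fin_ne: "finite ((\<lambda>i. ws \<bullet> x i) ` {..<n})" "(\<lambda>i. ws \<bullet> x i) ` {..<n} \<noteq> {}"
  using zero_in by auto

lemma a_ge: "i < n \<Longrightarrow> gam \<le> a i"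
proof -
  assume "i < n"
  have "gam = Min ((\<lambda>i. ws \<bullet> x i) ` {..<n})" using ws_max by (simp add: gam_def margin_def)
  also have "\<dots> \<le> ws \<bullet> x i" using fin_ne \<open>i < n\<close> by (intro Min_le) auto
  finally show ?thesis by (simp add: a_def inner_commute)
qed

lemma margin_le1: "norm v = 1 \<Longrightarrow> margin n x v \<le> 1"
proof -
  assume nv: "norm v = 1"
  have "margin n x v \<le> v \<bullet> x 0" unfolding margin_def using n_pos by (intro Min_le) auto
  also have "\<dots> \<le> norm v * norm (x 0)" by (rule norm_cauchy_schwarz)
  also have "\<dots> \<le> 1" using nv bounded n_pos by auto
  finally show ?thesis .
qed

lemma gam_le1: "gam \<le> 1"
  using margin_le1[OF ws_unit] ws_max by (simp add: gam_def)

lemma gam_pos: "gam > 0"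
proof -
  obtain w where w: "\<forall>i<n. w \<bullet> x i > 0" using separable by blast
  then have "w \<noteq> 0" using n_pos by (metis inner_zero_left less_irrefl less_le_trans zero_less_one)
  define w' where "w' = w /\<^sub>R norm w"
  have nw: "norm w' = 1" using \<open>w \<noteq> 0\<close> by (simp add: w'_def)
  have pos: "\<forall>i<n. w' \<bullet> x i > 0" using w \<open>w \<noteq> 0\<close> by (simp add: w'_def)
  have "margin n x w' > 0" unfolding margin_def using pos zero_in by (subst Min_gr_iff) auto
  moreover have "margin n x w' \<le> max_margin n x"
    unfolding max_margin_def
  proof (rule cSUP_upper)
    show "w' \<in> sphere 0 1" using nw by simp
    show "bdd_above ((margin n x) ` sphere 0 1)"
      by (rule bdd_aboveI[of _ 1]) (auto intro: margin_le1)
  qed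
  ultimately show ?thesis by (simp add: gam_def)
qed

lemma step_hat: "hat (Suc s) = hat s + eta / real n * (\<Sum>i<n. gg (z s i) * a i)"
  unfolding hat_def z_def a_def by (rule step_inner)
lemma step_til: "til (Suc s) = til s + eta / real n * (\<Sum>i<n. gg (z s i) * b i)"
  unfolding til_def z_def b_def by (rule step_inner)
lemma step_z: "z (Suc s) i = z s i + eta / real n * (\<Sum>j<n. gg (z s j) * (x j \<bullet> x i))"
  unfolding z_def by (rule step_inner)

lemma gg_pos: "gg r > 0" by (simp add: gg_def add_pos_pos)
lemma gg_le1: "gg r \<le> 1" by (simp add: gg_def add_pos_pos)

lemma hat_mono: "hat s \<le> hat (Suc s)"
proof -
  have "0 \<le> (\<Sum>i<n. gg (z s i) * a i)"
    using a_ge gam_pos gg_pos by (intro sum_nonneg) (smt (verit) lessThan_iff mult_pos_pos)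
  then show ?thesis using eta_pos by (simp add: step_hat)
qed

lemma hat1: "hat 1 \<ge> eta * gam / 2"
proof -
  have "(\<Sum>i<n. gg (z 0 i) * a i) \<ge> (\<Sum>i<n. gam / 2)"
    using a_ge by (intro sum_mono) (simp add: z_def gg_def)
  then have "(\<Sum>i<n. gg (z 0 i) * a i) \<ge> real n * gam / 2" by simp
  then have "eta / real n * (\<Sum>i<n. gg (z 0 i) * a i) \<ge> eta / real n * (real n * gam / 2)"
    using eta_pos by (intro mult_left_mono) auto
  moreover have "eta / real n * (real n * gam / 2) = eta * gam / 2" using n_pos by simp
  moreover have "hat 0 = 0" by (simp add: hat_def)
  ultimately show ?thesis using step_hat[of 0] by simp
qed

lemma hat_ge: "1 \<le> s \<Longrightarrow> hat s \<ge> eta * gam / 2"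
proof (induction s)
  case 0 then show ?case by simp
next
  case (Suc s)
  then show ?case
    using hat1 hat_mono[of s] by (cases "s = 0") auto
qed

end

lemma exp_ge_sq: "0 \<le> (t::real) \<Longrightarrow> t^2 / 4 \<le> exp t"
proof -
  assume t: "0 \<le> t"
  have "1 + t/2 \<le> exp (t/2)" by (rule exp_ge_add_one_self)
  then have "t/2 \<le> exp (t/2)" by linarith
  then have "(t/2)^2 \<le> (exp (t/2))^2" using t by (intro power_mono) auto
  also have "(exp (t/2))^2 = exp t" by (simp add: exp_double[symmetric] power2_eq_square exp_add[symmetric])
  finally show ?thesis by (simp add: power_divide)
qed

lemma dl_small_raw:
  fixes u g :: real
  assumes u: "u > 0" and g: "0 < g" "g \<le> 1" and ug: "u \<ge> 32 * ln (256 / g)"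
  shows "(u / g)^2 * exp (- u / 2) \<le> g / 262144"
proof -
  have lnA: "ln (256 / g) > 0" using g by (intro ln_gt_zero) (simp add: field_simps)
  have e1: "exp (u/4) \<ge> u^2 / 64"
    using exp_ge_sq[of "u/4"] u by (simp add: power_divide)
  have "3 * ln (256 / g) \<le> u / 4" using ug lnA by simp
  then have "exp (3 * ln (256 / g)) \<le> exp (u/4)" by simp
  moreover have "exp (3 * ln (256 / g)) = (256 / g)^3"
  proof -
    have "exp (real 3 * ln (256 / g)) = exp (ln (256 / g)) ^ 3" by (rule exp_of_nat_mult)
    then show ?thesis using g by simp
  qed
  ultimately have e2: "exp (u/4) \<ge> (256 / g)^3" by simp
  have "exp (u/2) = exp (u/4 + u/4)" by simp
  also have "\<dots> = exp (u/4) * exp (u/4)" by (rule exp_add)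
  finally have e0: "exp (u/2) = exp (u/4) * exp (u/4)" .
  have "(u^2 / 64) * (256 / g)^3 \<le> exp (u/4) * exp (u/4)"
    using e1 e2 u g by (intro mult_mono) auto
  then have e3: "exp (u/2) \<ge> (u^2 / 64) * (256 / g)^3" using e0 by simp
  have "exp (- u / 2) = 1 / exp (u/2)" by (simp add: exp_minus inverse_eq_divide)
  then have "(u / g)^2 * exp (- u / 2) = (u / g)^2 / exp (u/2)" by simp
  also have "\<dots> \<le> (u / g)^2 / ((u^2 / 64) * (256 / g)^3)"
    using e3 u g by (intro divide_left_mono) auto
  also have "\<dots> = g / 262144"
    using u g by (simp add: field_simps power2_eq_square power3_eq_cube)
  finally show ?thesis .
qed

context setting begin

lemma eta_ge_n: "eta \<ge> real n"
  using eta_ge by (simp add: eta0_def)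

lemma eta_ge1: "eta \<ge> 1"
  using eta_ge_n n_pos by simp

lemma eta_ge2: "eta \<ge> 32 / gam^2 * ln (256 / gam^2)"
  using eta_ge by (simp add: eta0_def gam_def)

lemma gam2_pos: "gam^2 > 0" using gam_pos by simp
lemma gam2_le1: "gam^2 \<le> 1" using gam_pos gam_le1 by (simp add: power_le_one)

lemma u_pos: "u > 0" using eta_pos gam2_pos by (simp add: u_def)

lemma lnA_pos: "ln (256 / gam^2) > 0"
proof -
  have "256 / gam^2 \<ge> 256" using gam2_pos gam2_le1 by (simp add: field_simps)
  then show ?thesis by (intro ln_gt_zero) linarith
qed

lemma u_ge: "u \<ge> 32 * ln (256 / gam^2)"
proof -
  have "eta * gam^2 \<ge> 32 / gam^2 * ln (256 / gam^2) * gam^2"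
    using eta_ge2 gam2_pos by (intro mult_right_mono) auto
  then show ?thesis using gam2_pos by (simp add: u_def)
qed

lemma eta_eq: "eta = u / gam^2" using gam2_pos by (simp add: u_def)

lemma Lam_le: "ln (8 * eta) \<le> u / 4"
proof -
  have q: "u / gam^2 = eta" using gam2_pos by (simp add: u_def)
  have "8 * eta = 8 * (u / gam^2)" unfolding q by simp
  also have "\<dots> = (u / 32) * (256 / gam^2)" by (simp add: field_simps)
  finally have "8 * eta = (u / 32) * (256 / gam^2)" .
  then have "ln (8 * eta) = ln ((u / 32) * (256 / gam^2))" by (rule arg_cong)
  also have "\<dots> = ln (u / 32) + ln (256 / gam^2)"
    using u_pos gam2_pos by (intro ln_mult_pos) auto
  finally have "ln (8 * eta) = ln (u / 32) + ln (256 / gam^2)" .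
  moreover have "ln (u / 32) \<le> u / 32 - 1" using u_pos by (intro ln_le_minus_one) simp
  moreover have "ln (256 / gam^2) \<le> u / 32" using u_ge by simp
  ultimately show ?thesis using u_pos by simp
qed

lemma dl_small: "eta^2 * dl \<le> gam^2 / 262144"
proof -
  have q: "u / gam^2 = eta" using gam2_pos by (simp add: u_def)
  have "(u / gam^2)^2 * exp (- u / 2) \<le> gam^2 / 262144"
    using dl_small_raw[OF u_pos gam2_pos gam2_le1 u_ge] .
  then show ?thesis unfolding q dl_def .
qed

lemma dl_pos: "dl > 0" by (simp add: dl_def)

lemma eps_small: "eta * dl \<le> gam^2 / 262144"
proof -
  have "eta * dl \<le> eta^2 * dl" using eta_ge1 dl_pos by (simp add: power2_eq_square)
  then show ?thesis using dl_small by simp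
qed

lemma eps_small_n: "real n * (eta * dl) \<le> gam^2 / 262144"
proof -
  have "real n * (eta * dl) \<le> eta * (eta * dl)" using eta_ge_n dl_pos eta_pos
    by (intro mult_right_mono) auto
  then show ?thesis using dl_small by (simp add: power2_eq_square mult.assoc)
qed

lemma lam_le: "lam gam eta \<le> eta * gam / 4"
proof -
  define y where "y = 1 / (8 * eta)"
  have y: "y > 0" using eta_pos by (simp add: y_def)
  have "exp y - 1 \<ge> y" using exp_ge_add_one_self[of y] by linarith
  then have "1 / (exp y - 1) \<le> 1 / y" using y by (intro divide_left_mono) auto
  then have "ln (1 / (exp y - 1)) \<le> ln (1 / y)" using y \<open>exp y - 1 \<ge> y\<close> by (subst ln_le_cancel_iff) auto
  also have "1 / y = 8 * eta" by (simp add: y_def)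
  finally have "ln (1 / (exp y - 1)) \<le> u / 4" using Lam_le by simp
  then have "(1 / gam) * ln (1 / (exp y - 1)) \<le> (1 / gam) * (u / 4)"
    using gam_pos by (intro mult_left_mono) auto
  also have "(1 / gam) * (u / 4) = eta * gam / 4" using gam_pos by (simp add: u_def power2_eq_square)
  finally show ?thesis by (simp add: lam_def y_def)
qed

end

lemma alg2:
  fixes F F' e G dl :: real
  assumes e: "e \<ge> 1" and G: "0 < G" "G \<le> 1" and dl: "0 < dl" and edl: "e^2 * dl \<le> G / 262144"
    and F: "F > 1 / (8 * e)" and F': "F' > 1 / (8 * e)"
    and H: "F' \<le> F - e * (G * ((F/2 - dl) * (F'/2 - dl)) - dl)"
  shows "1 / F' \<ge> 1 / F + e * G / 5"
proof -
  have e0: "e > 0" using e by simp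
  have y0: "1 / (8 * e) > 0" using e0 by simp
  have Fp: "F > 0" using F y0 by linarith
  have F'p: "F' > 0" using F' y0 by linarith
  have "e * dl \<le> e^2 * dl" using e dl by (simp add: power2_eq_square)
  then have "e * dl \<le> 1 / 262144" using edl G by simp
  then have dl1: "dl \<le> 1 / (262144 * e)" using e0 by (simp add: field_simps)
  have c1: "1 / (262144 * e) \<le> 1 / (320 * e)" using e0 by (simp add: field_simps)
  have c2: "1 / (320 * e) < F / 40" using F e0 by (simp add: field_simps)
  have c3: "1 / (320 * e) < F' / 40" using F' e0 by (simp add: field_simps)
  have dlF: "dl \<le> F / 40" using dl1 c1 c2 by linarith
  have dlF': "dl \<le> F' / 40" using dl1 c1 c3 by linarith
  have a1': "dl * F \<le> (F' / 40) * F" using dlF' Fp by (intro mult_right_mono) auto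
  have a2': "dl * F' \<le> (F / 40) * F'" using dlF F'p by (intro mult_right_mono) auto
  have q1: "(F' / 40) * F = (F * F') / 40" by (simp add: field_simps)
  have q2: "(F / 40) * F' = (F * F') / 40" by (simp add: field_simps)
  have a1: "dl * F \<le> (F * F') / 40" using a1' q1 by linarith
  have a2: "dl * F' \<le> (F * F') / 40" using a2' q2 by linarith
  have dd: "0 \<le> dl * dl" by simp
  have "(F/2 - dl) * (F'/2 - dl) = F * F' / 4 - dl * F / 2 - dl * F' / 2 + dl * dl"
    by (simp add: algebra_simps)
  also have "\<dots> \<ge> 9 * (F * F') / 40" using a1 a2 dd by linarith
  finally have b1: "(F/2 - dl) * (F'/2 - dl) \<ge> 9 * (F * F') / 40" .
  have "F * F' \<ge> (1 / (8 * e)) * (1 / (8 * e))" using F F' y0 Fp by (intro mult_mono) auto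
  then have FF: "F * F' \<ge> 1 / (64 * e^2)" by (simp add: power2_eq_square)
  have "dl \<le> G / (262144 * e^2)" using edl e0 by (simp add: field_simps)
  also have "\<dots> \<le> G / 40 * (1 / (64 * e^2))" using G e0 by (simp add: field_simps)
  also have "\<dots> \<le> G / 40 * (F * F')" using FF G by (intro mult_left_mono) auto
  finally have b2: "dl \<le> G / 40 * (F * F')" .
  have "G * ((F/2 - dl) * (F'/2 - dl)) \<ge> G * (9 * (F * F') / 40)"
    using b1 G by (intro mult_left_mono) auto
  then have "G * ((F/2 - dl) * (F'/2 - dl)) - dl \<ge> G * (F * F') / 5" using b2 by simp
  then have "e * (G * ((F/2 - dl) * (F'/2 - dl)) - dl) \<ge> e * (G * (F * F') / 5)"
    using e0 by (intro mult_left_mono) auto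
  moreover have "e * (G * (F * F') / 5) = e * G * (F * F') / 5" by simp
  ultimately have H2: "F' \<le> F - e * G * (F * F') / 5" using H by linarith
  then have "F' / (F * F') \<le> F / (F * F') - e * G / 5"
    using Fp F'p by (simp add: field_simps)
  then show ?thesis using Fp F'p by simp
qed

context setting begin

definition "ell r = ln (1 + exp (- r))"

lemma F_eq: "F s = (1 / real n) * (\<Sum>i<n. ell (z s i))"
  by (simp add: F_def logloss_def ell_def z_def)

lemma viol0:
  assumes "F s > 1 / (8 * eta)"
  shows "\<exists>i<n. z s i < ln (8 * eta)"
proof (rule ccontr)
  assume "\<not> ?thesis"
  then have h: "\<forall>i<n. z s i \<ge> ln (8 * eta)" by auto
  have "\<forall>i<n. ell (z s i) \<le> 1 / (8 * eta)"
  proof (intro allI impI)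
    fix i assume "i < n"
    have "ell (z s i) \<le> exp (- z s i)" unfolding ell_def by (rule ell_le_exp)
    also have "\<dots> \<le> exp (- ln (8 * eta))" using h \<open>i < n\<close> by simp
    also have "\<dots> = 1 / (8 * eta)" using eta_pos by (simp add: exp_minus inverse_eq_divide)
    finally show "ell (z s i) \<le> 1 / (8 * eta)" .
  qed
  then have "(\<Sum>i<n. ell (z s i)) \<le> (\<Sum>i<n. 1 / (8 * eta))" by (intro sum_mono) auto
  then have "(\<Sum>i<n. ell (z s i)) \<le> real n * (1 / (8 * eta))" by simp
  then have "(1 / real n) * (\<Sum>i<n. ell (z s i)) \<le> (1 / real n) * (real n * (1 / (8 * eta)))"
    using n_pos by (intro mult_left_mono) auto
  then have "F s \<le> 1 / (8 * eta)" using n_pos by (simp add: F_eq)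
  then show False using assms by simp
qed

lemma gg_big: "r < ln (8 * eta) \<Longrightarrow> gg r > 1 / (9 * eta)"
proof -
  assume "r < ln (8 * eta)"
  then have "exp r < 8 * eta" using eta_pos by (metis exp_less_cancel_iff exp_ln mult_pos_pos zero_less_numeral)
  then have "1 + exp r < 9 * eta" using eta_ge1 by simp
  then show ?thesis unfolding gg_def by (intro frac_less2) (auto simp: add_pos_pos)
qed

lemma a_pos: "i < n \<Longrightarrow> a i > 0" using a_ge gam_pos by (meson less_le_trans)

lemma hat_a: "1 \<le> s \<Longrightarrow> i < n \<Longrightarrow> hat s * a i \<ge> u / 2"
proof -
  assume "1 \<le> s" "i < n"
  have eg: "0 < eta * gam / 2" using eta_pos gam_pos by simp
  have h0: "0 \<le> hat s" using hat_ge[OF \<open>1 \<le> s\<close>] eg by linarith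
  have "hat s * a i \<ge> (eta * gam / 2) * gam"
    using hat_ge[OF \<open>1 \<le> s\<close>] a_ge[OF \<open>i < n\<close>] gam_pos h0 by (intro mult_mono) auto
  then show ?thesis by (simp add: u_def power2_eq_square)
qed

lemma good_z: "1 \<le> s \<Longrightarrow> 0 \<le> til s \<Longrightarrow> i < n \<Longrightarrow> 0 \<le> b i \<Longrightarrow> z s i \<ge> u / 2"
  using hat_a[of s i] z_eq[of s i] by (smt (verit) mult_nonneg_nonneg)

lemma good_gg: "1 \<le> s \<Longrightarrow> 0 \<le> til s \<Longrightarrow> i < n \<Longrightarrow> 0 \<le> b i \<Longrightarrow> gg (z s i) \<le> dl"
proof -
  assume h: "1 \<le> s" "0 \<le> til s" "i < n" "0 \<le> b i"
  have "gg (z s i) \<le> exp (- z s i)" unfolding gg_def by (rule g_le_exp)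
  also have "\<dots> \<le> exp (- u / 2)" using good_z[OF h] by simp
  finally show ?thesis by (simp add: dl_def)
qed

lemma good_ell: "1 \<le> s \<Longrightarrow> 0 \<le> til s \<Longrightarrow> i < n \<Longrightarrow> 0 \<le> b i \<Longrightarrow> ell (z s i) \<le> dl"
proof -
  assume h: "1 \<le> s" "0 \<le> til s" "i < n" "0 \<le> b i"
  have "ell (z s i) \<le> exp (- z s i)" unfolding ell_def by (rule ell_le_exp)
  also have "\<dots> \<le> exp (- u / 2)" using good_z[OF h] by simp
  finally show ?thesis by (simp add: dl_def)
qed

lemma viol:
  assumes "1 \<le> s" "F s > 1 / (8 * eta)" "til s > 0"
  shows "\<exists>k<n. z s k < ln (8 * eta) \<and> b k < 0 \<and> - b k * til s > u / 4 \<and> gg (z s k) > 1 / (9 * eta)"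
proof -
  obtain k where k: "k < n" "z s k < ln (8 * eta)" using viol0[OF assms(2)] by blast
  have "z s k < u / 4" using k Lam_le by simp
  moreover have "hat s * a k \<ge> u / 2" using hat_a assms(1) k(1) by blast
  ultimately have "til s * b k < - u / 4" using z_eq[of s k] by simp
  then have 1: "- b k * til s > u / 4" by (simp add: algebra_simps)
  have "b k < 0"
  proof (rule ccontr)
    assume "\<not> b k < 0"
    then have "til s * b k \<ge> 0" using assms(3) by simp
    then show False using \<open>til s * b k < - u / 4\<close> u_pos by simp
  qed
  then show ?thesis using k 1 gg_big by blast
qed

lemma til_low: "til (Suc s) \<ge> til s - eta"
proof -
  have "(\<Sum>j<n. gg (z s j) * b j) \<ge> (\<Sum>j<n. - 1)"
  proof (intro sum_mono)
    fix j assume "j \<in> {..<n}"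
    then have "\<bar>b j\<bar> \<le> 1" using b_bound by simp
    moreover have "0 < gg (z s j)" "gg (z s j) \<le> 1" using gg_pos gg_le1 by auto
    ultimately have "\<bar>gg (z s j) * b j\<bar> \<le> 1"
      by (simp add: abs_mult) (metis abs_ge_zero mult_le_one)
    then show "- 1 \<le> gg (z s j) * b j" by simp
  qed
  then have "(\<Sum>j<n. gg (z s j) * b j) \<ge> - real n" by simp
  then have "eta / real n * (\<Sum>j<n. gg (z s j) * b j) \<ge> eta / real n * (- real n)"
    using eta_pos by (intro mult_left_mono) auto
  then have "eta / real n * (\<Sum>j<n. gg (z s j) * b j) \<ge> - eta" using n_pos by simp
  then show ?thesis using step_til[of s] by simp
qed

lemma til_up:
  assumes "1 \<le> s" "0 \<le> til s" "k < n" "b k < 0"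
  shows "til (Suc s) \<le> til s + eta / real n * (b k * gg (z s k)) + eta * dl"
proof -
  have "(\<Sum>j<n. gg (z s j) * b j) \<le> (\<Sum>j<n. (if j = k then b k * gg (z s k) else 0) + dl)"
  proof (intro sum_mono)
    fix j assume j: "j \<in> {..<n}"
    show "gg (z s j) * b j \<le> (if j = k then b k * gg (z s k) else 0) + dl"
    proof (cases "j = k")
      case True then show ?thesis using dl_pos by simp
    next
      case False
      show ?thesis
      proof (cases "b j \<le> 0")
        case True
        then have "gg (z s j) * b j \<le> 0" using gg_pos[of "z s j"] by (simp add: mult_nonneg_nonpos)
        then show ?thesis using False dl_pos by simp
      next
        case nb: False
        have "gg (z s j) \<le> dl" using good_gg[OF assms(1,2)] j nb by simp
        moreover have "b j \<le> 1" using b_bound j by (simp add: abs_le_iff)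
        ultimately have "gg (z s j) * b j \<le> dl * 1" using nb gg_pos[of "z s j"]
          by (intro mult_mono) auto
        then show ?thesis using False by simp
      qed
    qed
  qed
  also have "\<dots> = b k * gg (z s k) + real n * dl"
    using assms(3) by (simp add: sum.distrib)
  finally have S: "(\<Sum>j<n. gg (z s j) * b j) \<le> b k * gg (z s k) + real n * dl" .
  have "eta / real n * (\<Sum>j<n. gg (z s j) * b j) \<le> eta / real n * (b k * gg (z s k) + real n * dl)"
    using S eta_pos by (intro mult_left_mono) auto
  also have "\<dots> = eta / real n * (b k * gg (z s k)) + eta * dl"
    using n_pos by (simp add: field_simps)
  finally show ?thesis using step_til[of s] by simp
qed

end

context setting begin

lemma pos_step:
  assumes "1 \<le> s" "F s > 1 / (8 * eta)" "0 < til s" "til s \<le> eta"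
  shows "til (Suc s) \<le> til s"
proof -
  obtain k where k: "k < n" "b k < 0" "- b k * til s > u / 4" "gg (z s k) > 1 / (9 * eta)"
    using viol[OF assms(1-3)] by blast
  have "- b k * eta \<ge> - b k * til s" using k(2) assms(4) by (intro mult_left_mono) auto
  then have "- b k * eta > eta * gam^2 / 4" using k(3) by (simp add: u_def)
  then have "eta * (gam^2 / 4) < eta * (- b k)" by (simp add: algebra_simps)
  then have bk: "- b k > gam^2 / 4" using eta_pos mult_less_cancel_left_pos by blast
  have "(- b k) * gg (z s k) \<ge> (gam^2 / 4) * (1 / (9 * eta))"
  proof (rule mult_mono)
    show "gam^2 / 4 \<le> - b k" using bk by simp
    show "1 / (9 * eta) \<le> gg (z s k)" using k(4) by simp
    show "0 \<le> - b k" using k(2) by simp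
    show "0 \<le> 1 / (9 * eta)" using eta_pos by simp
  qed
  then have "eta / real n * ((- b k) * gg (z s k)) \<ge> eta / real n * ((gam^2 / 4) * (1 / (9 * eta)))"
    using eta_pos n_pos by (intro mult_left_mono) auto
  moreover have "eta / real n * ((gam^2 / 4) * (1 / (9 * eta))) = gam^2 / (36 * real n)"
    using eta_pos n_pos by (simp add: field_simps)
  ultimately have d: "eta / real n * (b k * gg (z s k)) \<le> - (gam^2 / (36 * real n))"
    by (simp add: algebra_simps)
  have "0 \<le> real n * (eta * dl)" using eta_pos dl_pos by simp
  then have "real n * (eta * dl) \<le> gam^2 / 36" using eps_small_n gam2_pos by linarith
  then have e: "eta * dl \<le> gam^2 / (36 * real n)" using n_pos by (simp add: field_simps)
  show ?thesis using til_up[OF assms(1) _ k(1,2)] assms(3) d e by fastforce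
qed

lemma z_up:
  assumes "1 \<le> s" "F s > 1 / (8 * eta)" "0 < til s" "i < n" "b i \<le> 0"
  shows "z (Suc s) i > z s i"
proof -
  obtain k where k: "k < n" "b k < 0" "gg (z s k) > 1 / (9 * eta)"
    using viol[OF assms(1-3)] by blast
  have "(\<Sum>j<n. gg (z s j) * (x j \<bullet> x i)) \<ge> (\<Sum>j<n. (if j = k then gg (z s k) * gam^2 else 0) - dl)"
  proof (intro sum_mono)
    fix j assume j: "j \<in> {..<n}"
    show "(if j = k then gg (z s k) * gam^2 else 0) - dl \<le> gg (z s j) * (x j \<bullet> x i)"
    proof (cases "b j \<le> 0")
      case True
      have "a j * a i \<ge> gam * gam" using a_ge j assms(4) gam_pos a_pos by (intro mult_mono) (auto simp: less_imp_le)
      moreover have "b j * b i \<ge> 0" using True assms(5) by (simp add: mult_nonpos_nonpos)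
      ultimately have xx: "x j \<bullet> x i \<ge> gam^2" using inner_xx[of j i] by (simp add: power2_eq_square)
      then have "gg (z s j) * (x j \<bullet> x i) \<ge> gg (z s j) * gam^2"
        using gg_pos[of "z s j"] by (intro mult_left_mono) auto
      moreover have "gg (z s j) * gam^2 \<ge> 0" using gg_pos[of "z s j"] by simp
      ultimately show ?thesis using dl_pos by auto
    next
      case False
      then have "j \<noteq> k" using k(2) by auto
      have g: "gg (z s j) \<le> dl" using good_gg[OF assms(1)] assms(3) j False by simp
      have "x j \<bullet> x i \<ge> - 1" using inner_xx_bound[of j i] j assms(4) by simp
      then have "gg (z s j) * (x j \<bullet> x i) \<ge> gg (z s j) * (- 1)"
        using gg_pos[of "z s j"] by (intro mult_left_mono) auto
      then show ?thesis using g \<open>j \<noteq> k\<close> by simp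
    qed
  qed
  also have "(\<Sum>j<n. (if j = k then gg (z s k) * gam^2 else 0) - dl) = gg (z s k) * gam^2 - real n * dl"
    using k(1) by (simp add: sum_subtractf)
  finally have S: "(\<Sum>j<n. gg (z s j) * (x j \<bullet> x i)) \<ge> gg (z s k) * gam^2 - real n * dl" .
  have "eta / real n * (\<Sum>j<n. gg (z s j) * (x j \<bullet> x i)) \<ge> eta / real n * (gg (z s k) * gam^2 - real n * dl)"
    using S eta_pos by (intro mult_left_mono) auto
  also have "eta / real n * (gg (z s k) * gam^2 - real n * dl) = eta / real n * gg (z s k) * gam^2 - eta * dl"
    using n_pos by (simp add: field_simps)
  finally have T: "eta / real n * (\<Sum>j<n. gg (z s j) * (x j \<bullet> x i)) \<ge> eta / real n * gg (z s k) * gam^2 - eta * dl" .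
  have "eta / real n * gg (z s k) * gam^2 \<ge> eta / real n * (1 / (9 * eta)) * gam^2"
    using k(3) eta_pos n_pos gam2_pos by (intro mult_right_mono mult_left_mono) auto
  moreover have "eta / real n * (1 / (9 * eta)) * gam^2 = gam^2 / (9 * real n)"
    using eta_pos by simp
  moreover have "9 * (real n * (eta * dl)) < gam^2" using eps_small_n gam2_pos by linarith
  then have "eta * dl < gam^2 / (9 * real n)" using n_pos by (simp add: field_simps)
  ultimately have "eta / real n * gg (z s k) * gam^2 - eta * dl > 0" by linarith
  then show ?thesis using T step_z[of s i] by simp
qed

lemma allpos_pres:
  assumes "1 \<le> s" "F s > 1 / (8 * eta)" "0 < til s" "0 < til (Suc s)" "\<forall>i<n. z s i > 0"
  shows "\<forall>i<n. z (Suc s) i > 0"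
proof (intro allI impI)
  fix i assume i: "i < n"
  show "z (Suc s) i > 0"
  proof (cases "b i \<le> 0")
    case True then show ?thesis using z_up[OF assms(1-3) i True] assms(5) i by force
  next
    case False
    have "z (Suc s) i \<ge> u / 2" using good_z[of "Suc s" i] assms(1,4) i False by simp
    then show ?thesis using u_pos by simp
  qed
qed

end

context setting begin

lemma phase1:
  assumes s1: "1 \<le> s" and Fs: "F s > 1 / (8 * eta)" and t0: "0 < til s" and te: "til s \<le> eta"
    and t1: "0 < til (Suc s)" and k: "k < n" and zk: "z s k \<le> 0"
  shows "hat (Suc s) \<ge> hat s + eta * gam / (2 * real n)"
    and "(til (Suc s))^2 \<le> (til s)^2 - eta * gam / (2 * real n) * hat s + eta * (eta * dl)"
proof -
  have ha: "hat s * a k \<ge> u / 2" using hat_a[OF s1 k] .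
  have hg: "hat s \<ge> eta * gam / 2" using hat_ge[OF s1] .
  have eg: "0 < eta * gam / 2" using eta_pos gam_pos by simp
  have h0: "0 \<le> hat s" using hg eg by linarith
  have zk': "z s k = hat s * a k + til s * b k" by (rule z_eq)
  have tb: "til s * b k \<le> - (hat s * a k)" using zk zk' by linarith
  then have tb': "- b k * til s \<ge> hat s * a k" by (simp add: algebra_simps)
  have "hat s * a k \<ge> hat s * gam" using a_ge[OF k] h0 by (intro mult_left_mono) auto
  then have hb: "- b k * til s \<ge> hat s * gam" using tb' by linarith
  have bk: "b k < 0"
  proof (rule ccontr)
    assume "\<not> b k < 0"
    then have "til s * b k \<ge> 0" using t0 by simp
    then show False using tb ha u_pos by linarith
  qed
  have ggk: "gg (z s k) \<ge> 1 / 2"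
  proof -
    have "exp (z s k) \<le> 1" using zk by simp
    then have "1 + exp (z s k) \<le> 2" by simp
    then show ?thesis unfolding gg_def by (simp add: field_simps add_pos_pos)
  qed
  define d where "d = eta / real n * (- b k * gg (z s k))"
  define ep where "ep = eta * dl"
  have tu: "til (Suc s) \<le> til s - d + ep"
    using til_up[OF s1 _ k bk] t0 by (simp add: d_def ep_def)
  have m1: "(1 / 2) * (hat s * gam) \<le> gg (z s k) * (- b k * til s)"
  proof (rule mult_mono)
    show "1 / 2 \<le> gg (z s k)" using ggk .
    show "hat s * gam \<le> - b k * til s" using hb .
    show "0 \<le> gg (z s k)" using gg_pos[of "z s k"] by simp
    show "0 \<le> hat s * gam" using h0 gam_pos by simp
  qed
  have "d * til s = eta / real n * (gg (z s k) * (- b k * til s))" by (simp add: d_def algebra_simps)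
  also have "\<dots> \<ge> eta / real n * ((1 / 2) * (hat s * gam))"
    using m1 eta_pos n_pos by (intro mult_left_mono) auto
  finally have dt: "d * til s \<ge> eta * gam / (2 * real n) * hat s" by (simp add: field_simps)
  have "- b k * eta \<ge> - b k * til s" using bk te by (intro mult_left_mono) auto
  moreover have "hat s * gam \<ge> (eta * gam / 2) * gam" using hg gam_pos by (intro mult_right_mono) auto
  ultimately have "- b k * eta \<ge> eta * (gam^2 / 2)" using hb by (simp add: power2_eq_square algebra_simps)
  then have "eta * (gam^2 / 2) \<le> eta * (- b k)" by (simp add: algebra_simps)
  then have bk2: "- b k \<ge> gam^2 / 2" using eta_pos mult_le_cancel_left_pos by blast
  have "- b k * gg (z s k) \<ge> (gam^2 / 2) * (1 / 2)"
  proof (rule mult_mono)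
    show "gam^2 / 2 \<le> - b k" using bk2 .
    show "1 / 2 \<le> gg (z s k)" using ggk .
    show "0 \<le> - b k" using bk by simp
    show "0 \<le> (1::real) / 2" by simp
  qed
  then have "d \<ge> eta / real n * ((gam^2 / 2) * (1 / 2))" unfolding d_def
    using eta_pos n_pos by (intro mult_left_mono) auto
  moreover have "eta / real n \<ge> 1" using eta_ge_n n_pos by simp
  moreover have "eta / real n * ((gam^2 / 2) * (1 / 2)) \<ge> 1 * ((gam^2 / 2) * (1 / 2))"
    using \<open>eta / real n \<ge> 1\<close> gam2_pos by (intro mult_right_mono) auto
  ultimately have "d \<ge> 1 * ((gam^2 / 2) * (1 / 2))" by linarith
  moreover have "ep \<le> gam^2 / 262144" unfolding ep_def by (rule eps_small)
  ultimately have dep: "ep \<le> d" using gam2_pos by linarith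
  define c where "c = d - ep"
  have c0: "0 \<le> c" using dep by (simp add: c_def)
  have tc: "til (Suc s) \<le> til s - c" using tu by (simp add: c_def)
  have ct: "c \<le> til s" using tc t1 by linarith
  have "(til (Suc s))^2 \<le> (til s - c)^2" using tc t1 by (intro power_mono) auto
  also have "(til s - c)^2 = (til s)^2 - til s * c - c * (til s - c)" by (simp add: power2_eq_square algebra_simps)
  also have "\<dots> \<le> (til s)^2 - til s * c" using c0 ct by (simp add: mult_nonneg_nonneg)
  also have "til s * c = d * til s - ep * til s" by (simp add: c_def algebra_simps)
  finally have A: "(til (Suc s))^2 \<le> (til s)^2 - d * til s + ep * til s" by simp
  have "ep * til s \<le> ep * eta" using te dl_pos eta_pos by (simp add: ep_def)
  then show "(til (Suc s))^2 \<le> (til s)^2 - eta * gam / (2 * real n) * hat s + eta * (eta * dl)"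
    using A dt by (simp add: ep_def algebra_simps)
  have "(\<Sum>j<n. gg (z s j) * a j) \<ge> (\<Sum>j<n. if j = k then gg (z s k) * a k else 0)"
  proof (intro sum_mono)
    fix j assume "j \<in> {..<n}"
    then have "gg (z s j) * a j \<ge> 0" using gg_pos[of "z s j"] a_pos[of j] by simp
    then show "(if j = k then gg (z s k) * a k else 0) \<le> gg (z s j) * a j" by simp
  qed
  also have "(\<Sum>j<n. if j = k then gg (z s k) * a k else 0) = gg (z s k) * a k" using k by simp
  finally have S: "(\<Sum>j<n. gg (z s j) * a j) \<ge> gg (z s k) * a k" .
  have "gg (z s k) * a k \<ge> (1 / 2) * gam" using ggk a_ge[OF k] gam_pos by (intro mult_mono) auto
  then have "(\<Sum>j<n. gg (z s j) * a j) \<ge> gam / 2" using S by simp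
  then have "eta / real n * (\<Sum>j<n. gg (z s j) * a j) \<ge> eta / real n * (gam / 2)"
    using eta_pos n_pos by (intro mult_left_mono) auto
  then show "hat (Suc s) \<ge> hat s + eta * gam / (2 * real n)"
    using step_hat[of s] by (simp add: field_simps)
qed

end

context setting begin

lemma dl_le_F: "F s > 1 / (8 * eta) \<Longrightarrow> dl \<le> F s / 2"
proof -
  assume h: "F s > 1 / (8 * eta)"
  have "eta * dl \<le> 1 / 262144" using eps_small gam2_le1 by linarith
  then have "dl \<le> 1 / (262144 * eta)" using eta_pos by (simp add: field_simps)
  moreover have "1 / (262144 * eta) \<le> 1 / (16 * eta)" using eta_pos by (simp add: field_simps)
  moreover have "1 / (16 * eta) < F s / 2" using h eta_pos by (simp add: field_simps)
  ultimately show ?thesis by linarith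
qed

lemma phase2:
  assumes s1: "1 \<le> s" and Fs: "F s > 1 / (8 * eta)" and Fs': "F (Suc s) > 1 / (8 * eta)"
    and t0: "0 < til s" and t1: "0 < til (Suc s)"
    and p0: "\<forall>i<n. z s i > 0" and p1: "\<forall>i<n. z (Suc s) i > 0"
  shows "1 / F (Suc s) \<ge> 1 / F s + eta * gam^2 / 5"
proof -
  define g where "g j = gg (z s j)" for j
  define g' where "g' j = gg (z (Suc s) j)" for j
  define P where "P j = (if b j \<le> 0 then g j else 0)" for j
  define P' where "P' j = (if b j \<le> 0 then g' j else 0)" for j
  define X where "X j i = x j \<bullet> x i" for j i
  have tang: "ell (z (Suc s) i) \<le> ell (z s i) - (z (Suc s) i - z s i) * g' i" for i
    unfolding ell_def g'_def gg_def by (rule ell_tangent)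
  have "(\<Sum>i<n. ell (z (Suc s) i)) \<le> (\<Sum>i<n. ell (z s i) - (z (Suc s) i - z s i) * g' i)"
    using tang by (intro sum_mono) auto
  also have "\<dots> = (\<Sum>i<n. ell (z s i)) - (\<Sum>i<n. (z (Suc s) i - z s i) * g' i)"
    by (simp add: sum_subtractf)
  finally have A: "(\<Sum>i<n. ell (z (Suc s) i)) \<le> (\<Sum>i<n. ell (z s i)) - (\<Sum>i<n. (z (Suc s) i - z s i) * g' i)" .
  have B: "(\<Sum>i<n. (z (Suc s) i - z s i) * g' i) = eta / real n * (\<Sum>i<n. \<Sum>j<n. g' i * g j * X j i)"
  proof -
    have "(z (Suc s) i - z s i) * g' i = eta / real n * (\<Sum>j<n. g' i * g j * X j i)" for i
    proof -
      have "(z (Suc s) i - z s i) * g' i = eta / real n * ((\<Sum>j<n. g j * X j i) * g' i)"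
        using step_z[of s i] by (simp add: g_def X_def)
      also have "(\<Sum>j<n. g j * X j i) * g' i = (\<Sum>j<n. g' i * g j * X j i)"
        by (simp add: sum_distrib_right sum_distrib_left mult_ac)
      finally show ?thesis .
    qed
    then show ?thesis by (simp add: sum_distrib_left)
  qed
  have trm: "g' i * g j * X j i \<ge> gam^2 * (P' i * P j) - dl" if i: "i < n" and j: "j < n" for i j
  proof (cases "b i \<le> 0 \<and> b j \<le> 0")
    case True
    have "a j * a i \<ge> gam * gam" using a_ge j i gam_pos a_pos by (intro mult_mono) (auto simp: less_imp_le)
    moreover have "b j * b i \<ge> 0" using True by (simp add: mult_nonpos_nonpos)
    ultimately have xx: "X j i \<ge> gam^2" using inner_xx[of j i] by (simp add: X_def power2_eq_square)
    have gp: "0 \<le> g' i * g j" using gg_pos by (simp add: g_def g'_def less_imp_le)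
    have "g' i * g j * X j i \<ge> g' i * g j * gam^2" using xx gp by (intro mult_left_mono) auto
    then show ?thesis using True dl_pos by (simp add: P_def P'_def algebra_simps)
  next
    case False
    have gp: "0 \<le> g' i * g j" using gg_pos by (simp add: g_def g'_def less_imp_le)
    have "X j i \<ge> - 1" using inner_xx_bound[OF j i] by (simp add: X_def)
    then have "(g' i * g j) * (- 1) \<le> (g' i * g j) * X j i" using gp by (rule mult_left_mono)
    then have m: "g' i * g j * X j i \<ge> - (g' i * g j)" by simp
    have "g' i * g j \<le> dl"
    proof (cases "b i \<le> 0")
      case True
      then have "\<not> b j \<le> 0" using False by simp
      then have "g j \<le> dl" using good_gg[OF s1 _ j] t0 by (simp add: g_def)
      moreover have "g' i \<le> 1" using gg_le1 by (simp add: g'_def)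
      moreover have "0 \<le> g j" using gg_pos by (simp add: g_def less_imp_le)
      ultimately have "g' i * g j \<le> 1 * g j" by (intro mult_right_mono)
      then show ?thesis using \<open>g j \<le> dl\<close> by simp
    next
      case False
      then have "g' i \<le> dl" using good_gg[of "Suc s" i] t1 i by (simp add: g'_def)
      moreover have "g j \<le> 1" using gg_le1 by (simp add: g_def)
      moreover have "0 \<le> g' i" using gg_pos by (simp add: g'_def less_imp_le)
      ultimately have "g' i * g j \<le> g' i * 1" by (intro mult_left_mono)
      then show ?thesis using \<open>g' i \<le> dl\<close> by simp
    qed
    moreover have "gam^2 * (P' i * P j) = 0" using False by (auto simp: P_def P'_def)
    ultimately show ?thesis using m by linarith
  qed
  have "(\<Sum>i<n. \<Sum>j<n. g' i * g j * X j i) \<ge> (\<Sum>i<n. \<Sum>j<n. gam^2 * (P' i * P j) - dl)"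
    using trm by (intro sum_mono) auto
  also have "(\<Sum>i<n. \<Sum>j<n. gam^2 * (P' i * P j) - dl) = gam^2 * ((\<Sum>i<n. P' i) * (\<Sum>j<n. P j)) - real n * real n * dl"
  proof -
    have e1: "(\<Sum>i<n. \<Sum>j<n. gam^2 * (P' i * P j) - dl) = (\<Sum>i<n. \<Sum>j<n. gam^2 * (P' i * P j)) - real n * real n * dl"
      by (simp add: sum_subtractf)
    have e2: "(\<Sum>i<n. \<Sum>j<n. gam^2 * (P' i * P j)) = gam^2 * (\<Sum>i<n. \<Sum>j<n. P' i * P j)"
      by (simp add: sum_distrib_left)
    have e3: "(\<Sum>i<n. \<Sum>j<n. P' i * P j) = (\<Sum>i<n. P' i) * (\<Sum>j<n. P j)"
      by (simp add: sum_product)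
    show ?thesis using e1 e2 e3 by simp
  qed
  finally have C: "(\<Sum>i<n. \<Sum>j<n. g' i * g j * X j i) \<ge> gam^2 * ((\<Sum>i<n. P' i) * (\<Sum>j<n. P j)) - real n * real n * dl" .
  have Pb: "(\<Sum>j<n. P j) \<ge> real n * (F s / 2 - dl)"
  proof -
    have "(\<Sum>j<n. P j) \<ge> (\<Sum>j<n. ell (z s j) / 2 - dl)"
    proof (intro sum_mono)
      fix j assume j: "j \<in> {..<n}"
      show "ell (z s j) / 2 - dl \<le> P j"
      proof (cases "b j \<le> 0")
        case True
        have "ell (z s j) \<le> exp (- z s j)" unfolding ell_def by (rule ell_le_exp)
        moreover have "exp (- z s j) / 2 \<le> g j" unfolding g_def gg_def using p0 j by (intro g_ge_half) auto
        ultimately show ?thesis using True dl_pos by (simp add: P_def)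
      next
        case False
        have "ell (z s j) \<le> dl" using good_ell[OF s1 _ _] t0 j False by simp
        then show ?thesis using False dl_pos by (simp add: P_def)
      qed
    qed
    also have "(\<Sum>j<n. ell (z s j) / 2 - dl) = real n * (F s / 2 - dl)"
      using n_pos by (simp add: F_eq sum_subtractf sum_divide_distrib[symmetric] field_simps)
    finally show ?thesis .
  qed
  have P'b: "(\<Sum>j<n. P' j) \<ge> real n * (F (Suc s) / 2 - dl)"
  proof -
    have "(\<Sum>j<n. P' j) \<ge> (\<Sum>j<n. ell (z (Suc s) j) / 2 - dl)"
    proof (intro sum_mono)
      fix j assume j: "j \<in> {..<n}"
      show "ell (z (Suc s) j) / 2 - dl \<le> P' j"
      proof (cases "b j \<le> 0")
        case True
        have "ell (z (Suc s) j) \<le> exp (- z (Suc s) j)" unfolding ell_def by (rule ell_le_exp)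
        moreover have "exp (- z (Suc s) j) / 2 \<le> g' j" unfolding g'_def gg_def using p1 j by (intro g_ge_half) auto
        ultimately show ?thesis using True dl_pos by (simp add: P'_def)
      next
        case False
        have "ell (z (Suc s) j) \<le> dl" using good_ell[of "Suc s" j] t1 j False by simp
        then show ?thesis using False dl_pos by (simp add: P'_def)
      qed
    qed
    also have "(\<Sum>j<n. ell (z (Suc s) j) / 2 - dl) = real n * (F (Suc s) / 2 - dl)"
      using n_pos by (simp add: F_eq sum_subtractf sum_divide_distrib[symmetric] field_simps)
    finally show ?thesis .
  qed
  have d0: "0 \<le> F s / 2 - dl" using dl_le_F[OF Fs] by simp
  have d1: "0 \<le> F (Suc s) / 2 - dl" using dl_le_F[OF Fs'] by simp
  have "(\<Sum>i<n. P' i) * (\<Sum>j<n. P j) \<ge> (real n * (F (Suc s) / 2 - dl)) * (real n * (F s / 2 - dl))"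
  proof (rule mult_mono)
    have "0 \<le> real n * (F (Suc s) / 2 - dl)" using d1 by simp
    then show "0 \<le> (\<Sum>i<n. P' i)" using P'b by linarith
    show "0 \<le> real n * (F s / 2 - dl)" using d0 by simp
  qed (use P'b Pb in auto)
  then have "gam^2 * ((\<Sum>i<n. P' i) * (\<Sum>j<n. P j)) \<ge> gam^2 * ((real n * (F (Suc s) / 2 - dl)) * (real n * (F s / 2 - dl)))"
    using gam2_pos by (intro mult_left_mono) auto
  then have D0: "(\<Sum>i<n. \<Sum>j<n. g' i * g j * X j i) \<ge> real n * real n * (gam^2 * ((F s / 2 - dl) * (F (Suc s) / 2 - dl)) - dl)"
    using C by (simp add: algebra_simps)
  define Q where "Q = gam^2 * ((F s / 2 - dl) * (F (Suc s) / 2 - dl)) - dl"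
  have D: "(\<Sum>i<n. \<Sum>j<n. g' i * g j * X j i) \<ge> real n * real n * Q" using D0 by (simp add: Q_def)
  have "eta / real n * (\<Sum>i<n. \<Sum>j<n. g' i * g j * X j i) \<ge> eta / real n * (real n * real n * Q)"
    using D eta_pos n_pos by (intro mult_left_mono) auto
  moreover have "eta / real n * (real n * real n * Q) = real n * (eta * Q)" using n_pos by simp
  ultimately have E0: "(\<Sum>i<n. (z (Suc s) i - z s i) * g' i) \<ge> real n * (eta * Q)"
    using B by linarith
  then have E: "(\<Sum>i<n. (z (Suc s) i - z s i) * g' i) \<ge> real n * (eta * (gam^2 * ((F s / 2 - dl) * (F (Suc s) / 2 - dl)) - dl))"
    by (simp add: Q_def)
  have "F (Suc s) = (1 / real n) * (\<Sum>i<n. ell (z (Suc s) i))" by (rule F_eq)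
  also have "\<dots> \<le> (1 / real n) * ((\<Sum>i<n. ell (z s i)) - (\<Sum>i<n. (z (Suc s) i - z s i) * g' i))"
    using A n_pos by (intro mult_left_mono) auto
  also have "\<dots> = F s - (1 / real n) * (\<Sum>i<n. (z (Suc s) i - z s i) * g' i)"
    by (simp add: F_eq right_diff_distrib)
  also have "\<dots> \<le> F s - (1 / real n) * (real n * (eta * (gam^2 * ((F s / 2 - dl) * (F (Suc s) / 2 - dl)) - dl)))"
    using E n_pos by (intro diff_left_mono mult_left_mono) auto
  also have "\<dots> = F s - eta * (gam^2 * ((F s / 2 - dl) * (F (Suc s) / 2 - dl)) - dl)"
    using n_pos by simp
  finally have H: "F (Suc s) \<le> F s - eta * (gam^2 * ((F s / 2 - dl) * (F (Suc s) / 2 - dl)) - dl)" .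
  show ?thesis using alg2[OF eta_ge1 gam2_pos gam2_le1 dl_pos _ Fs Fs' H] dl_small by simp
qed

end

lemma alg1:
  fixes k e g N ep :: real
  assumes e: "e \<ge> 1" and g: "0 < g" "g \<le> 1" and N: "N \<ge> 1" and ep: "0 \<le> ep" "N * ep \<le> g^2 / 262144"
    and H: "(e * g / (2 * N))^2 * (k * (k - 1) / 2) \<le> e^2 + k * e * ep"
  shows "k < 2 + 3 * N / g"
proof (rule ccontr)
  assume "\<not> ?thesis"
  then have k: "k \<ge> 2 + 3 * N / g" by simp
  have "g * k \<ge> g * (2 + 3 * N / g)" using k g by (intro mult_left_mono) auto
  moreover have "g * (2 + 3 * N / g) = 2 * g + 3 * N" using g by (simp add: field_simps)
  ultimately have gk: "g * k \<ge> 2 * g + 3 * N" by linarith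
  have N0: "N > 0" using N by simp
  have k0: "k > 0" using k g N0 by (smt (verit) divide_pos_pos)
  have gk1: "g * (k - 1) \<ge> 3 * N" using gk g by (simp add: algebra_simps)
  have gk2: "g * k \<ge> 3 * N" using gk g by simp
  have L: "(e * g / (2 * N))^2 * (k * (k - 1) / 2) = e^2 * ((g * k) * (g * (k - 1))) / (8 * N^2)"
    using N0 by (simp add: field_simps power2_eq_square)
  have "(g * k) * (g * (k - 1)) \<ge> (g * k) * (3 * N)" using gk1 gk2 N0 by (intro mult_left_mono) auto
  then have "e^2 * ((g * k) * (3 * N)) \<le> e^2 * ((g * k) * (g * (k - 1)))"
    by (rule mult_left_mono) auto
  then have "e^2 * ((g * k) * (g * (k - 1))) / (8 * N^2) \<ge> e^2 * ((g * k) * (3 * N)) / (8 * N^2)"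
    using N0 by (intro divide_right_mono) auto
  moreover have "e^2 * ((g * k) * (3 * N)) / (8 * N^2) = e^2 * (g * k) / (3 * N) + e^2 * g * k / (24 * N)"
    using N0 by (simp add: field_simps power2_eq_square)
  moreover have "e^2 * (g * k) / (3 * N) \<ge> e^2 * (3 * N) / (3 * N)"
  proof -
    have "e^2 * (3 * N) \<le> e^2 * (g * k)" using gk2 by (rule mult_left_mono) auto
    then show ?thesis using N0 by (intro divide_right_mono) auto
  qed
  moreover have "e^2 * (3 * N) / (3 * N) = e^2" using N0 by simp
  moreover have "e^2 * g * k / (24 * N) > k * e * ep"
  proof -
    have "N * ep < g / 24"
    proof -
      have "g^2 \<le> g" using g by (simp add: power2_eq_square mult_le_cancel_left1)
      then show ?thesis using ep g by linarith
    qed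
    then have "ep < g / (24 * N)" using N0 by (simp add: field_simps)
    also have "\<dots> \<le> e * g / (24 * N)" using e g N0 by (simp add: field_simps)
    finally have "ep < e * g / (24 * N)" .
    then have "k * e * ep < k * e * (e * g / (24 * N))" using k0 e by (intro mult_strict_left_mono) auto
    also have "\<dots> = e^2 * g * k / (24 * N)" by (simp add: field_simps power2_eq_square)
    finally show ?thesis .
  qed
  ultimately have "(e * g / (2 * N))^2 * (k * (k - 1) / 2) > e^2 + k * e * ep" using L by linarith
  then show False using H by simp
qed

context setting begin

definition "allpos m = (\<forall>i<n. z m i > 0)"

lemma run_bound:
  assumes s0: "1 \<le> s0"
    and hi: "\<forall>k\<le>K. F (s0 + k) > 1 / (8 * eta)"
    and pos: "\<forall>k\<le>K. til (s0 + k) > 0"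
    and bnd: "\<forall>k\<le>K. til (s0 + k) \<le> eta"
  shows "real K < 2 + 3 * real n / gam + 40 / gam^2"
proof -
  define K1 where "K1 = (LEAST k. K \<le> k \<or> allpos (s0 + k))"
  have ex: "K \<le> K \<or> allpos (s0 + K)" by simp
  have K1K: "K1 \<le> K" unfolding K1_def by (rule Least_le) simp
  have before: "k < K1 \<Longrightarrow> k < K \<and> \<not> allpos (s0 + k)" for k
    using not_less_Least[of k "\<lambda>k. K \<le> k \<or> allpos (s0 + k)"] by (simp add: K1_def)
  have atK1: "K \<le> K1 \<or> allpos (s0 + K1)" unfolding K1_def by (rule LeastI[of _ K]) simp
  define c where "c = eta * gam / (2 * real n)"
  define ep where "ep = eta * dl"
  have c0: "c \<ge> 0" using eta_pos gam_pos by (simp add: c_def)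
  have ph1: "k \<le> K1 \<Longrightarrow> hat (s0 + k) \<ge> real k * c \<and>
      (til (s0 + k))^2 \<le> eta^2 - c^2 * (real k * (real k - 1) / 2) + real k * eta * ep" for k
  proof (induction k)
    case 0
    have "hat s0 \<ge> eta * gam / 2" using hat_ge[OF s0] .
    moreover have "eta * gam / 2 > 0" using eta_pos gam_pos by simp
    moreover have "0 < til s0" "til s0 \<le> eta" using pos bnd by (metis add_0_right le0)+
    ultimately show ?case by (simp add: power_mono)
  next
    case (Suc k)
    then have kK1: "k < K1" by simp
    then have kK: "k < K" and np: "\<not> allpos (s0 + k)" using before by auto
    then obtain i where i: "i < n" "z (s0 + k) i \<le> 0" unfolding allpos_def by auto
    have IH: "hat (s0 + k) \<ge> real k * c"
      "(til (s0 + k))^2 \<le> eta^2 - c^2 * (real k * (real k - 1) / 2) + real k * eta * ep"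
      using Suc kK1 by auto
    have s1: "1 \<le> s0 + k" using s0 by simp
    have F1: "F (s0 + k) > 1 / (8 * eta)" using hi kK by simp
    have t0: "0 < til (s0 + k)" using pos kK by simp
    have te: "til (s0 + k) \<le> eta" using bnd kK by simp
    have t1: "0 < til (Suc (s0 + k))" using pos kK by (metis Suc_leI add_Suc_right)
    note P = phase1[OF s1 F1 t0 te t1 i]
    have "hat (Suc (s0 + k)) \<ge> real k * c + c" using P(1) IH(1) by (simp add: c_def)
    then have A: "hat (s0 + Suc k) \<ge> real (Suc k) * c" by (simp add: algebra_simps)
    have "c * hat (s0 + k) \<ge> c * (real k * c)" using IH(1) c0 by (rule mult_left_mono)
    then have "(til (Suc (s0 + k)))^2 \<le> eta^2 - c^2 * (real k * (real k - 1) / 2) + real k * eta * ep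
        - c * (real k * c) + eta * ep"
      using P(2) IH(2) by (simp add: c_def ep_def)
    also have "\<dots> = eta^2 - c^2 * (real (Suc k) * (real (Suc k) - 1) / 2) + real (Suc k) * eta * ep"
      by (simp add: field_simps power2_eq_square)
    finally show ?case using A by simp
  qed
  have K1b: "real K1 < 2 + 3 * real n / gam"
  proof (rule alg1[OF eta_ge1 gam_pos gam_le1])
    show "1 \<le> real n" using n_pos by simp
    show "0 \<le> ep" using eta_pos dl_pos by (simp add: ep_def)
    show "real n * ep \<le> gam^2 / 262144" using eps_small_n by (simp add: ep_def)
    have "(til (s0 + K1))^2 \<le> eta^2 - c^2 * (real K1 * (real K1 - 1) / 2) + real K1 * eta * ep"
      using ph1[of K1] by simp
    moreover have "0 \<le> (til (s0 + K1))^2" by simp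
    ultimately have "c^2 * (real K1 * (real K1 - 1) / 2) \<le> eta^2 + real K1 * eta * ep" by linarith
    then show "(eta * gam / (2 * real n))^2 * (real K1 * (real K1 - 1) / 2) \<le> eta^2 + real K1 * eta * ep"
      by (simp only: c_def)
  qed
  have ph2: "K1 \<le> k \<Longrightarrow> k \<le> K \<Longrightarrow> 1 / F (s0 + k) \<ge> 1 / F (s0 + K1) + real (k - K1) * (eta * gam^2 / 5)" for k
  proof (induction k)
    case 0 then show ?case by simp
  next
    case (Suc k)
    show ?case
    proof (cases "K1 = Suc k")
      case True then show ?thesis by simp
    next
      case False
      then have kK1: "K1 \<le> k" and kK: "k < K" using Suc by auto
      have IH: "1 / F (s0 + k) \<ge> 1 / F (s0 + K1) + real (k - K1) * (eta * gam^2 / 5)"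
        using Suc kK1 kK by auto
      have K1K': "K1 < K" using kK1 kK by simp
      have ap: "K1 \<le> m \<Longrightarrow> m \<le> K \<Longrightarrow> allpos (s0 + m)" for m
      proof (induction m)
        case 0 then show ?case using atK1 K1K' by simp
      next
        case (Suc m)
        show ?case
        proof (cases "K1 = Suc m")
          case True then show ?thesis using atK1 K1K' by simp
        next
          case False
          then have "K1 \<le> m" "m < K" using Suc by auto
          then have apm: "allpos (s0 + m)" using Suc by auto
          have "1 \<le> s0 + m" using s0 by simp
          moreover have "F (s0 + m) > 1 / (8 * eta)" "0 < til (s0 + m)" using hi pos \<open>m < K\<close> by auto
          moreover have "0 < til (Suc (s0 + m))" using pos \<open>m < K\<close> by (metis Suc_leI add_Suc_right)
          ultimately have "\<forall>i<n. z (Suc (s0 + m)) i > 0"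
            using allpos_pres apm unfolding allpos_def by blast
          then show ?thesis by (simp add: allpos_def)
        qed
      qed
      have s1: "1 \<le> s0 + k" using s0 by simp
      have F1: "F (s0 + k) > 1 / (8 * eta)" using hi kK by simp
      have F2: "F (Suc (s0 + k)) > 1 / (8 * eta)" using hi kK by (metis Suc_leI add_Suc_right)
      have t0: "0 < til (s0 + k)" using pos kK by simp
      have t1: "0 < til (Suc (s0 + k))" using pos kK by (metis Suc_leI add_Suc_right)
      have p0: "\<forall>i<n. z (s0 + k) i > 0" using ap[of k] kK1 kK unfolding allpos_def by simp
      have p1: "\<forall>i<n. z (Suc (s0 + k)) i > 0" using ap[of "Suc k"] kK1 kK unfolding allpos_def by simp
      have "1 / F (Suc (s0 + k)) \<ge> 1 / F (s0 + k) + eta * gam^2 / 5"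
        by (rule phase2[OF s1 F1 F2 t0 t1 p0 p1])
      moreover have "real (Suc k - K1) * (eta * gam^2 / 5) = real (k - K1) * (eta * gam^2 / 5) + eta * gam^2 / 5"
        using kK1 by (simp add: Suc_diff_le field_simps)
      ultimately show ?thesis using IH by (simp only: add_Suc_right)
    qed
  qed
  have "1 / F (s0 + K) \<ge> 1 / F (s0 + K1) + real (K - K1) * (eta * gam^2 / 5)"
    using ph2[OF K1K] by simp
  moreover have "F (s0 + K1) > 0" using hi K1K eta_pos
    by (metis divide_pos_pos less_trans mult_pos_pos zero_less_numeral zero_less_one)
  moreover have "1 / F (s0 + K) < 8 * eta"
  proof -
    have h: "F (s0 + K) > 1 / (8 * eta)" using hi by simp
    moreover have "1 / (8 * eta) > 0" using eta_pos by simp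
    ultimately have Fp: "F (s0 + K) > 0" by linarith
    have "1 < 8 * eta * F (s0 + K)" using h eta_pos by (simp add: field_simps)
    then show ?thesis using Fp by (simp add: field_simps)
  qed
  ultimately have "real (K - K1) * (eta * gam^2 / 5) < 8 * eta"
    by (smt (verit) divide_pos_pos)
  then have "real (K - K1) * (eta * (gam^2 / 5)) < eta * 8" by (simp add: algebra_simps)
  then have "real (K - K1) * (gam^2 / 5) < 8" using eta_pos by (simp add: algebra_simps mult_less_cancel_left_pos)
  then have "real (K - K1) < 40 / gam^2" using gam2_pos by (simp add: field_simps)
  then show ?thesis using K1b K1K by linarith
qed

end

context setting begin

lemma neg_setting: "setting n x eta ws (- vs)"
  using n_pos bounded separable ws_unit ws_max vs_unit vs_orth eta_pos eta_ge
  by unfold_locales auto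

lemma F_hi: "enat s < tau n x eta \<Longrightarrow> F s > 1 / (8 * eta)"
proof -
  assume h: "enat s < tau n x eta"
  show ?thesis
  proof (cases "\<exists>t. logloss n x (gd n x eta t) \<le> 1 / (8 * eta)")
    case True
    then have "tau n x eta = enat (LEAST t. logloss n x (gd n x eta t) \<le> 1 / (8 * eta))"
      by (simp add: tau_def)
    then have "s < (LEAST t. logloss n x (gd n x eta t) \<le> 1 / (8 * eta))" using h by simp
    then have "\<not> logloss n x (gd n x eta s) \<le> 1 / (8 * eta)" by (rule not_less_Least)
    then show ?thesis by (simp add: F_def)
  next
    case False
    then show ?thesis by (simp add: F_def not_le)
  qed
qed

lemma til_nz: "1 \<le> s \<Longrightarrow> F s > 1 / (8 * eta) \<Longrightarrow> til s \<noteq> 0"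
proof -
  assume s1: "1 \<le> s" and hF: "F s > 1 / (8 * eta)"
  obtain i where i: "i < n" "z s i < ln (8 * eta)" using viol0[OF hF] by blast
  have "hat s * a i \<ge> u / 2" using hat_a[OF s1 i(1)] .
  moreover have "z s i < u / 4" using i Lam_le by simp
  ultimately have "til s * b i < 0" using z_eq[of s i] u_pos by simp
  then show ?thesis by auto
qed

lemma til_inv: "enat s < tau n x eta \<Longrightarrow> \<bar>til s\<bar> \<le> eta"
proof (induction s)
  case 0 then show ?case using eta_pos by (simp add: til_def)
next
  case (Suc s)
  interpret N: setting n x eta ws "- vs" by (rule neg_setting)
  have NT: "N.til m = - til m" for m by (simp add: N.til_def til_def)
  have NF: "N.F m = F m" for m by (simp add: N.F_def F_def)
  have hs: "enat s < tau n x eta" using Suc.prems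
    by (metis Suc_ile_eq order_less_imp_le)
  have IH: "\<bar>til s\<bar> \<le> eta" using Suc.IH hs by simp
  have lo: "til (Suc s) \<ge> til s - eta" by (rule til_low)
  have hi: "til (Suc s) \<le> til s + eta" using N.til_low[of s] NT by simp
  have Fs: "F s > 1 / (8 * eta)" using F_hi[OF hs] .
  show ?case
  proof (cases "til s = 0")
    case True then show ?thesis using lo hi by simp
  next
    case False
    then have s1: "1 \<le> s" by (cases s) (auto simp: til_def)
    show ?thesis
    proof (cases "til s > 0")
      case True
      have "til (Suc s) \<le> til s" using pos_step[OF s1 Fs True] IH by simp
      then show ?thesis using lo IH True by simp
    next
      case nt: False
      then have "N.til s > 0" using False NT by simp
      moreover have "N.til s \<le> eta" using IH NT by simp
      moreover have "N.F s > 1 / (8 * eta)" using Fs NF by simp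
      ultimately have "N.til (Suc s) \<le> N.til s" using N.pos_step[OF s1] by blast
      then have "til (Suc s) \<ge> til s" using NT by simp
      then show ?thesis using hi IH nt by simp
    qed
  qed
qed

end

context setting begin

lemma pos_chain:
  assumes "\<forall>k<K. til (s0 + Suc k) * til (s0 + k) > 0" "til s0 > 0"
  shows "\<forall>k\<le>K. til (s0 + k) > 0"
proof (intro allI impI)
  fix k assume "k \<le> K"
  then show "til (s0 + k) > 0"
  proof (induction k)
    case 0 then show ?case using assms(2) by simp
  next
    case (Suc k)
    then have "til (s0 + k) > 0" "til (s0 + Suc k) * til (s0 + k) > 0" using assms(1) by auto
    then show ?case by (simp add: zero_less_mult_iff)
  qed
qed

lemma main:
  assumes tlt: "enat t < tau n x eta"
  shows "\<exists>s::nat. t \<le> s \<and>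
           real s \<le> real t + 1 + 4 * real n / max_margin n x + 96 / (max_margin n x)\<^sup>2 \<and>
           (enat s = tau n x eta \<or> oscillation n x eta ws vs s)"
proof (rule ccontr)
  assume nex: "\<not> ?thesis"
  have gdef: "max_margin n x = gam" by (simp add: gam_def)
  define B where "B = 4 * real n / gam + 96 / gam^2"
  have B1: "4 * real n / gam \<ge> 0" using gam_pos by simp
  have B2: "96 / gam^2 \<ge> 96" using gam2_pos gam2_le1 by (simp add: field_simps)
  have B96: "B \<ge> 96" using B1 B2 by (simp add: B_def)
  define S where "S = nat \<lfloor>real t + 1 + B\<rfloor>"
  have fl0: "\<lfloor>real t + 1 + B\<rfloor> \<ge> 0" using B96 by simp
  have Sle: "real S \<le> real t + 1 + B" unfolding S_def using fl0 by simp
  have Sge: "real S \<ge> real t + B" unfolding S_def using fl0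
    by (smt (verit) real_of_int_floor_ge_diff_one of_nat_nat)
  have inwin: "real s \<le> real t + 1 + 4 * real n / max_margin n x + 96 / (max_margin n x)\<^sup>2"
    if "s \<le> S" for s
  proof -
    have "real s \<le> real S" using that by simp
    then show ?thesis using Sle by (simp add: B_def gdef)
  qed
  have notau: "t \<le> s \<Longrightarrow> s \<le> S \<Longrightarrow> enat s \<noteq> tau n x eta" for s using nex inwin by blast
  have noosc: "t \<le> s \<Longrightarrow> s \<le> S \<Longrightarrow> \<not> oscillation n x eta ws vs s" for s using nex inwin by blast
  have ltk: "t + k \<le> S \<Longrightarrow> enat (t + k) < tau n x eta" for k
  proof (induction k)
    case 0 then show ?case using tlt by simp
  next
    case (Suc k)
    then have "enat (t + k) < tau n x eta" by simp
    then have "enat (Suc (t + k)) \<le> tau n x eta" by (simp add: Suc_ile_eq)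
    moreover have "enat (Suc (t + k)) \<noteq> tau n x eta" using notau[of "Suc (t + k)"] Suc.prems by simp
    ultimately show ?case by simp
  qed
  have lt: "t \<le> s \<Longrightarrow> s \<le> S \<Longrightarrow> enat s < tau n x eta" for s
    using ltk[of "s - t"] by simp
  define s0 where "s0 = max t 1"
  have s01: "1 \<le> s0" "t \<le> s0" and s0t: "real s0 \<le> real t + 1" by (auto simp: s0_def)
  have s0S: "s0 \<le> S" using Sge B96 s0t by simp
  define K where "K = S - s0"
  have KS: "s0 + k \<le> S" if "k \<le> K" for k using that s0S by (simp add: K_def)
  have hiF: "\<forall>k\<le>K. F (s0 + k) > 1 / (8 * eta)"
    using F_hi lt KS s01 by (meson le_add1 order_trans)
  have nz: "\<forall>k\<le>K. til (s0 + k) \<noteq> 0" using til_nz hiF s01 by (meson le_add1 order_trans)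
  have bnd: "\<forall>k\<le>K. \<bar>til (s0 + k)\<bar> \<le> eta" using til_inv lt KS s01 by (meson le_add1 order_trans)
  have prod: "\<forall>k<K. til (s0 + Suc k) * til (s0 + k) > 0"
  proof (intro allI impI)
    fix k assume k: "k < K"
    let ?s = "s0 + k"
    have "\<not> oscillation n x eta ws vs ?s" using noosc KS k s01 by (meson le_add1 less_imp_le order_trans)
    moreover have "gd n x eta ?s \<bullet> ws \<ge> lam (max_margin n x) eta"
    proof -
      have "hat ?s \<ge> eta * gam / 2" using hat_ge s01 by simp
      moreover have "eta * gam / 4 \<le> eta * gam / 2" using eta_pos gam_pos by simp
      ultimately show ?thesis using lam_le by (simp add: hat_def gdef)
    qed
    moreover have "logloss n x (gd n x eta ?s) > 1 / (8 * eta)" using hiF k by (simp add: F_def)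
    moreover have "logloss n x (gd n x eta (Suc ?s)) > 1 / (8 * eta)" using hiF k
      by (metis F_def Suc_leI add_Suc_right)
    ultimately have "\<not> (gd n x eta (Suc ?s) \<bullet> vs) * (gd n x eta ?s \<bullet> vs) < 0"
      unfolding oscillation_def by blast
    then have "til (Suc ?s) * til ?s \<ge> 0" by (simp add: til_def)
    moreover have "til (Suc ?s) \<noteq> 0" "til ?s \<noteq> 0" using nz k by (metis Suc_leI add_Suc_right less_imp_le)+
    ultimately show "til (s0 + Suc k) * til (s0 + k) > 0" by (simp add: less_le)
  qed
  have KB: "real K < 2 + 3 * real n / gam + 40 / gam^2"
  proof (cases "til s0 > 0")
    case True
    have "\<forall>k\<le>K. til (s0 + k) > 0" using pos_chain[OF prod True] .
    moreover have "\<forall>k\<le>K. til (s0 + k) \<le> eta" using bnd by auto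
    ultimately show ?thesis using run_bound[OF s01(1) hiF] by blast
  next
    case False
    interpret N: setting n x eta ws "- vs" by (rule neg_setting)
    have NT: "N.til m = - til m" for m by (simp add: N.til_def til_def)
    have NF: "N.F m = F m" for m by (simp add: N.F_def F_def)
    have NG: "N.gam = gam" by (simp add: N.gam_def gam_def)
    have "til s0 \<noteq> 0" using nz by auto
    then have "N.til s0 > 0" using False NT by simp
    moreover have "\<forall>k<K. N.til (s0 + Suc k) * N.til (s0 + k) > 0" using prod NT by simp
    ultimately have "\<forall>k\<le>K. N.til (s0 + k) > 0" using N.pos_chain by blast
    moreover have "\<forall>k\<le>K. N.til (s0 + k) \<le> eta" using bnd NT by auto
    moreover have "\<forall>k\<le>K. N.F (s0 + k) > 1 / (8 * eta)" using hiF NF by simp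
    ultimately show ?thesis using N.run_bound[OF s01(1)] NG by blast
  qed
  have "real K = real S - real s0" using s0S by (simp add: K_def)
  then have "real K \<ge> B - 1" using Sge s0t by simp
  then have "4 * real n / gam + 96 / gam^2 < 3 + 3 * real n / gam + 40 / gam^2" using KB by (simp add: B_def)
  moreover have "real n / gam \<ge> 0" using gam_pos by simp
  moreover have "56 / gam^2 \<ge> 56" using gam2_pos gam2_le1 by (simp add: field_simps)
  moreover have "4 * real n / gam = 3 * real n / gam + real n / gam" by (simp add: field_simps)
  moreover have "96 / gam^2 = 40 / gam^2 + 56 / gam^2" by (simp add: field_simps)
  ultimately show False by linarith
qed

end

theorem lemma7:
  fixes n :: nat and x :: "nat \<Rightarrow> real^2" and eta :: real
    and ws vs :: "real^2" and t :: nat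
  assumes n_pos: "n \<ge> 1"
    and bounded: "\<forall>i<n. norm (x i) \<le> 1"
    and separable: "\<exists>w. \<forall>i<n. w \<bullet> x i > 0"
    and ws_unit: "norm ws = 1"
    and ws_max: "margin n x ws = max_margin n x"
    and vs_unit: "norm vs = 1"
    and vs_orth: "vs \<bullet> ws = 0"
    and eta_pos: "eta > 0"
    and eta_ge: "eta \<ge> eta0 n (max_margin n x)"
    and t_lt: "enat t < tau n x eta"
  shows "\<exists>s::nat. t \<le> s \<and>
           real s \<le> real t + 1 + 4 * real n / max_margin n x + 96 / (max_margin n x)\<^sup>2 \<and>
           (enat s = tau n x eta \<or> oscillation n x eta ws vs s)"
proof -
  interpret setting n x eta ws vs
    using n_pos bounded separable ws_unit ws_max vs_unit vs_orth eta_pos eta_ge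
    by unfold_locales auto
  show ?thesis using main[OF t_lt] .
qed

end
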